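(* For all $n,k\in\mathbb{N}$ with $k\ge1$ and $n\ge k+2$, setting $x_k:=\big(1-\frac{k^2}{n^2}\big)^{1/2}$, we have $$\tau_{n,k}<\delta_{n,k}:=\frac{D_{n,k}(x_k)}{T_n^{(k)}(1)}.$$
   Context: $T_n$ denotes the Chebyshev polynomial of the first kind of degree $n$, $T_n(\cos\theta)=\cos n\theta$. For integers $n\ge k+2$, $k\ge 1$, let $\omega_{n,k}$ be the rightmost (largest) zero of $T_n^{(k+1)}$ and define $\tau_{n,k}:=|T_n^{(k)}(\omega_{n,k})|/T_n^{(k)}(1)$. Let $S_n(x):=\frac1n\sqrt{1-x^2}\,T_n'(x)$ and define the Duffin–Schaeffer majorant $D_{n,k}(x):=\big([T_n^{(k)}(x)]^2+[S_n^{(k)}(x)]^2\big)^{1/2}$ for $x\in(-1,1)$. *)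

theory Defs
  imports "HOL-Analysis.Analysis" "HOL-Computational_Algebra.Polynomial"
begin

text \<open>Chebyshev polynomials of the first kind, T_0 = 1, T_1 = x,
  T_(n+2) = 2 x T_(n+1) - T_n (so that T_n(cos t) = cos(n t)).\<close>
fun cheb_T :: "nat \<Rightarrow> real poly" where
  "cheb_T 0 = 1"
| "cheb_T (Suc 0) = [:0, 1:]"
| "cheb_T (Suc (Suc n)) = smult 2 ([:0, 1:] * cheb_T (Suc n)) - cheb_T n"

definition cheb_T_deriv :: "nat \<Rightarrow> nat \<Rightarrow> real poly" where
  "cheb_T_deriv n k = (pderiv ^^ k) (cheb_T n)"

definition cheb_omega :: "nat \<Rightarrow> nat \<Rightarrow> real" where
  "cheb_omega n k = Max {x. poly (cheb_T_deriv n (Suc k)) x = 0}"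

definition cheb_tau :: "nat \<Rightarrow> nat \<Rightarrow> real" where
  "cheb_tau n k = \<bar>poly (cheb_T_deriv n k) (cheb_omega n k)\<bar> / poly (cheb_T_deriv n k) 1"

definition cheb_S :: "nat \<Rightarrow> real \<Rightarrow> real" where
  "cheb_S n x = (1 / real n) * sqrt (1 - x\<^sup>2) * poly (pderiv (cheb_T n)) x"

text \<open>Duffin--Schaeffer majorant D_{n,k}(x), for x in (-1,1); the k-th derivative of S_n
  is the iterated real derivative (well defined on the open interval (-1,1)).\<close>
definition DS_majorant :: "nat \<Rightarrow> nat \<Rightarrow> real \<Rightarrow> real" where
  "DS_majorant n k x = sqrt ((poly (cheb_T_deriv n k) x)\<^sup>2 + ((deriv ^^ k) (cheb_S n) x)\<^sup>2)"

end

theory Submission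
  imports Defs
begin

abbreviation T :: "nat \<Rightarrow> real \<Rightarrow> real" where "T n x \<equiv> poly (cheb_T n) x"
abbreviation T' :: "nat \<Rightarrow> real \<Rightarrow> real" where "T' n x \<equiv> poly (pderiv (cheb_T n)) x"
abbreviation T'' :: "nat \<Rightarrow> real \<Rightarrow> real" where "T'' n x \<equiv> poly (pderiv (pderiv (cheb_T n))) x"

lemma cheb_rec_eval:
  "T (Suc (Suc n)) x = 2 * x * T (Suc n) x - T n x"
  "T' (Suc (Suc n)) x = 2 * T (Suc n) x + 2 * x * T' (Suc n) x - T' n x"
  "T'' (Suc (Suc n)) x = 4 * T' (Suc n) x + 2 * x * T'' (Suc n) x - T'' n x"
  by (simp_all add: pderiv_mult pderiv_smult pderiv_diff pderiv_add pderiv_pCons algebra_simps)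

lemma cheb_FO: "(1 - x\<^sup>2) * T' (Suc n) x = real (Suc n) * (T n x - x * T (Suc n) x)"
proof (induction n rule: nat_less_induct)
  case (1 n)
  show ?case
  proof (cases n)
    case 0 then show ?thesis by (simp add: pderiv_pCons power2_eq_square)
  next
    case (Suc m)
    show ?thesis
    proof (cases m)
      case 0
      then show ?thesis using Suc
        by (simp add: pderiv_mult pderiv_smult pderiv_diff pderiv_pCons algebra_simps power2_eq_square)
    next
      case (Suc l)
      have IHa: "(1 - x\<^sup>2) * T' (Suc l) x = real (Suc l) * (T l x - x * T (Suc l) x)"
        using 1 \<open>n = Suc m\<close> Suc by auto
      have IHb: "(1 - x\<^sup>2) * T' (Suc (Suc l)) x = real (Suc (Suc l)) * (T (Suc l) x - x * T (Suc (Suc l)) x)"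
        using 1 \<open>n = Suc m\<close> Suc by auto
      have r0: "T l x = 2 * x * T (Suc l) x - T (Suc (Suc l)) x" using cheb_rec_eval(1)[of l x] by simp
      have r1: "T (Suc (Suc (Suc l))) x = 2 * x * T (Suc (Suc l)) x - T (Suc l) x" by (rule cheb_rec_eval(1))
      have "(1 - x\<^sup>2) * T' (Suc (Suc (Suc l))) x = 2 * (1 - x\<^sup>2) * T (Suc (Suc l)) x
          + 2 * x * ((1 - x\<^sup>2) * T' (Suc (Suc l)) x) - (1 - x\<^sup>2) * T' (Suc l) x"
        by (simp del: cheb_T.simps add: cheb_rec_eval(2) algebra_simps)
      also have "\<dots> = 2 * (1 - x\<^sup>2) * T (Suc (Suc l)) x
          + 2 * x * (real (Suc (Suc l)) * (T (Suc l) x - x * T (Suc (Suc l)) x))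
          - real (Suc l) * (T l x - x * T (Suc l) x)" by (simp only: IHa IHb)
      also have "\<dots> = real (Suc (Suc (Suc l))) * (T (Suc (Suc l)) x - x * T (Suc (Suc (Suc l))) x)"
        unfolding r0 r1 by (simp del: cheb_T.simps add: algebra_simps power2_eq_square)
      finally show ?thesis unfolding \<open>n = Suc m\<close> Suc .
    qed
  qed
qed

lemma cheb_ODE: "(1 - x\<^sup>2) * T'' n x - x * T' n x + (real n)\<^sup>2 * T n x = 0"
proof (induction n rule: nat_less_induct)
  case (1 n)
  show ?case
  proof (cases n)
    case 0 then show ?thesis by simp
  next
    case (Suc m)
    show ?thesis
    proof (cases m)
      case 0
      then show ?thesis using Suc by (simp add: pderiv_pCons)
    next
      case (Suc l)
      have IHa: "(1 - x\<^sup>2) * T'' l x - x * T' l x + (real l)\<^sup>2 * T l x = 0"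
        using 1 \<open>n = Suc m\<close> Suc by auto
      have IHb: "(1 - x\<^sup>2) * T'' (Suc l) x - x * T' (Suc l) x + (real (Suc l))\<^sup>2 * T (Suc l) x = 0"
        using 1 \<open>n = Suc m\<close> Suc by auto
      have FO: "(1 - x\<^sup>2) * T' (Suc l) x = real (Suc l) * (T l x - x * T (Suc l) x)"
        by (rule cheb_FO)
      have "(1 - x\<^sup>2) * T'' (Suc (Suc l)) x - x * T' (Suc (Suc l)) x + (real (Suc (Suc l)))\<^sup>2 * T (Suc (Suc l)) x
          = 4 * ((1 - x\<^sup>2) * T' (Suc l) x + real (Suc l) * x * T (Suc l) x - real (Suc l) * T l x)
            + 2 * x * ((1 - x\<^sup>2) * T'' (Suc l) x - x * T' (Suc l) x + (real (Suc l))\<^sup>2 * T (Suc l) x)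
            - ((1 - x\<^sup>2) * T'' l x - x * T' l x + (real l)\<^sup>2 * T l x)"
        by (simp del: cheb_T.simps add: cheb_rec_eval algebra_simps power2_eq_square)
      also have "\<dots> = 0" using IHa IHb FO by (simp add: algebra_simps)
      finally show ?thesis unfolding \<open>n = Suc m\<close> Suc .
    qed
  qed
qed

lemma ctd_Suc: "cheb_T_deriv n (Suc j) = pderiv (cheb_T_deriv n j)"
  by (simp add: cheb_T_deriv_def)

lemma ctd_0: "cheb_T_deriv n 0 = cheb_T n"
  by (simp add: cheb_T_deriv_def)

abbreviation Y :: "nat \<Rightarrow> nat \<Rightarrow> real \<Rightarrow> real" where "Y n j x \<equiv> poly (cheb_T_deriv n j) x"

lemma deriv_ODE:
  "(1 - x\<^sup>2) * Y n (Suc (Suc j)) x - (2 * real j + 1) * x * Y n (Suc j) x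
     + ((real n)\<^sup>2 - (real j)\<^sup>2) * Y n j x = 0"
proof (induction j arbitrary: x)
  case 0
  show ?case using cheb_ODE[of x n] by (simp add: ctd_Suc ctd_0)
next
  case (Suc j)
  define P where "P = [:1,0,-1:] * cheb_T_deriv n (Suc (Suc j))
     - smult (2 * real j + 1) ([:0,1:] * cheb_T_deriv n (Suc j))
     + smult ((real n)\<^sup>2 - (real j)\<^sup>2) (cheb_T_deriv n j)"
  have "\<forall>x. poly P x = 0"
  proof
    fix x
    show "poly P x = 0" using Suc.IH[of x] unfolding P_def
      by (simp add: algebra_simps power2_eq_square)
  qed
  hence P0: "P = 0" using poly_all_0_iff_0 by blast
  have "poly (pderiv P) x = 0" by (simp add: P0)
  thus ?case unfolding P_def
    by (simp add: pderiv_mult pderiv_smult pderiv_diff pderiv_add pderiv_pCons pderiv_minus ctd_Suc[symmetric]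
        algebra_simps power2_eq_square)
qed

lemma cheb_T_at_1: "T n 1 = 1"
proof (induction n rule: nat_less_induct)
  case (1 n)
  show ?case
  proof (cases n)
    case 0 then show ?thesis by simp
  next
    case (Suc m)
    show ?thesis
    proof (cases m)
      case 0 then show ?thesis using Suc by simp
    next
      case (Suc l)
      have "T l 1 = 1" "T (Suc l) 1 = 1" using 1 \<open>n = Suc m\<close> Suc by auto
      then show ?thesis using cheb_rec_eval(1)[of l 1] \<open>n = Suc m\<close> Suc by simp
    qed
  qed
qed

lemma Y_at_1_rec: "Y n (Suc j) 1 = ((real n)\<^sup>2 - (real j)\<^sup>2) / (2 * real j + 1) * Y n j 1"
  using deriv_ODE[of 1 n j] by (simp add: field_simps)

lemma Y_at_1_pos: "j \<le> n \<Longrightarrow> Y n j 1 > 0"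
proof (induction j)
  case 0 then show ?case by (simp add: ctd_0 cheb_T_at_1)
next
  case (Suc j)
  have "j < n" using Suc.prems by simp
  hence "(real j)\<^sup>2 < (real n)\<^sup>2" by (simp add: power_strict_mono)
  moreover have "Y n j 1 > 0" using Suc by simp
  ultimately show ?case unfolding Y_at_1_rec by (simp add: field_simps)
qed

lemma degree_cheb_T: "degree (cheb_T n) \<le> n"
proof (induction n rule: nat_less_induct)
  case (1 n)
  show ?case
  proof (cases n)
    case 0 then show ?thesis by simp
  next
    case (Suc m)
    show ?thesis
    proof (cases m)
      case 0 then show ?thesis using Suc by simp
    next
      case (Suc l)
      have d1: "degree (cheb_T l) \<le> l" "degree (cheb_T (Suc l)) \<le> Suc l" using 1 \<open>n = Suc m\<close> Suc by auto
      have "degree ([:0, 1:] * cheb_T (Suc l)) \<le> degree [:0,1::real:] + degree (cheb_T (Suc l))"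
        by (rule degree_mult_le)
      also have "\<dots> \<le> Suc (Suc l)" using d1 by simp
      finally have "degree ([:0, 1:] * cheb_T (Suc l)) \<le> Suc (Suc l)" .
      hence "degree (smult 2 ([:0, 1:] * cheb_T (Suc l))) \<le> Suc (Suc l)"
        using degree_smult_le order_trans by blast
      hence "degree (smult 2 ([:0, 1:] * cheb_T (Suc l)) - cheb_T l) \<le> Suc (Suc l)"
        using d1 degree_diff_le[of "smult 2 ([:0, 1:] * cheb_T (Suc l))" "Suc (Suc l)" "cheb_T l"] by simp
      then show ?thesis using \<open>n = Suc m\<close> Suc by simp
    qed
  qed
qed

lemma degree_ctd: "degree (cheb_T_deriv n j) \<le> n - j"
proof (induction j)
  case 0 then show ?case by (simp add: ctd_0 degree_cheb_T)
next
  case (Suc j) then show ?case by (simp add: ctd_Suc degree_pderiv)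
qed

lemma ctd_vanish: "j > n \<Longrightarrow> cheb_T_deriv n j = 0"
proof -
  assume "j > n"
  then obtain i where i: "j = Suc i" "i \<ge> n" by (cases j) auto
  have "degree (cheb_T_deriv n i) = 0" using degree_ctd[of n i] i by simp
  thus ?thesis using i by (simp add: ctd_Suc pderiv_eq_0_iff)
qed

lemma Y_DERIV: "DERIV (Y n j) x :> Y n (Suc j) x"
  by (simp add: ctd_Suc)

lemma Y_cont: "continuous_on S (Y n j)"
  by (intro continuous_intros)

lemma Y_ge_1: "j \<le> n \<Longrightarrow> x \<ge> 1 \<Longrightarrow> Y n j x \<ge> Y n j 1"
proof (induction "n - j" arbitrary: j x)
  case 0
  hence j: "j = n" by simp
  have "Y n (Suc j) t = 0" for t using ctd_vanish[of n "Suc j"] j by simp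
  show ?case
    by (rule DERIV_nonneg_imp_nondecreasing[OF \<open>x \<ge> 1\<close>]) (use Y_DERIV \<open>\<And>t. Y n (Suc j) t = 0\<close> in fastforce)
next
  case (Suc d)
  have IH: "\<And>t. t \<ge> 1 \<Longrightarrow> Y n (Suc j) t \<ge> Y n (Suc j) 1"
    using Suc.hyps(1)[of "Suc j"] Suc.hyps(2) by simp
  have pos: "Y n (Suc j) 1 > 0" using Y_at_1_pos[of "Suc j" n] Suc.hyps(2) by simp
  show ?case
  proof (rule DERIV_nonneg_imp_nondecreasing[OF \<open>x \<ge> 1\<close>])
    fix t assume "1 \<le> t" "t \<le> x"
    thus "\<exists>y. DERIV (Y n j) t :> y \<and> 0 \<le> y"
      using Y_DERIV IH pos by (meson dual_order.trans less_imp_le)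
  qed
qed

lemma Y_pos_ge_1: "j \<le> n \<Longrightarrow> x \<ge> 1 \<Longrightarrow> Y n j x > 0"
  using Y_ge_1 Y_at_1_pos by (meson less_le_trans)

lemma cheb_T_parity: "T n (-x) = (-1)^n * T n x"
proof (induction n rule: nat_less_induct)
  case (1 n)
  show ?case
  proof (cases n)
    case 0 then show ?thesis by simp
  next
    case (Suc m)
    show ?thesis
    proof (cases m)
      case 0 then show ?thesis using Suc by simp
    next
      case (Suc l)
      have "T l (-x) = (-1)^l * T l x" "T (Suc l) (-x) = (-1)^(Suc l) * T (Suc l) x"
        using 1 \<open>n = Suc m\<close> Suc by auto
      hence "T (Suc (Suc l)) (-x) = 2 * (-x) * ((-1)^(Suc l) * T (Suc l) x) - (-1)^l * T l x"
        using cheb_rec_eval(1)[of l "-x"] by simp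
      also have "\<dots> = (-1)^l * (2 * x * T (Suc l) x - T l x)" by (simp add: algebra_simps)
      also have "\<dots> = (-1)^(Suc (Suc l)) * T (Suc (Suc l)) x"
        using cheb_rec_eval(1)[of l x] by simp
      finally show ?thesis using \<open>n = Suc m\<close> Suc by simp
    qed
  qed
qed

lemma Y_parity: "Y n j (-x) = (-1)^(n+j) * Y n j x"
proof (induction j arbitrary: x)
  case 0 then show ?case by (simp add: ctd_0 cheb_T_parity)
next
  case (Suc j)
  have d1: "DERIV (\<lambda>t. Y n j (-t)) x :> - Y n (Suc j) (-x)"
    using DERIV_chain2[OF Y_DERIV[of n j "-x"] DERIV_minus[OF DERIV_ident]] by simp
  have d2: "DERIV (\<lambda>t. (-1)^(n+j) * Y n j t) x :> (-1)^(n+j) * Y n (Suc j) x"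
    by (intro DERIV_cmult Y_DERIV)
  have "(\<lambda>t. Y n j (-t)) = (\<lambda>t. (-1)^(n+j) * Y n j t)" using Suc.IH by auto
  hence "- Y n (Suc j) (-x) = (-1)^(n+j) * Y n (Suc j) x" using d1 d2 DERIV_unique by metis
  thus ?case by simp
qed

lemma sqrt_pow_deriv:
  fixes z :: real
  assumes "-1 < z" "z < 1"
  shows "((\<lambda>x. sqrt (1 - x\<^sup>2) ^ m) has_real_derivative
            (- real m * z * sqrt (1 - z\<^sup>2) ^ m / (1 - z\<^sup>2))) (at z)"
proof -
  have p: "1 - z\<^sup>2 > 0" using assms by (simp add: abs_square_less_1)
  define s where "s = sqrt (1 - z\<^sup>2)"
  have s: "s > 0" "s * s = 1 - z\<^sup>2" using p unfolding s_def by auto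
  have d1: "((\<lambda>x. sqrt (1 - x\<^sup>2)) has_real_derivative (- z / s)) (at z)"
    unfolding s_def
    by (rule derivative_eq_intros refl | use p in \<open>simp add: field_simps power2_eq_square\<close>)+
  show ?thesis
  proof (cases m)
    case 0 then show ?thesis by simp
  next
    case (Suc m')
    have "((\<lambda>x. sqrt (1 - x\<^sup>2) ^ m) has_real_derivative (real m * ((- z / s) * s ^ (m - Suc 0)))) (at z)"
      using DERIV_power[OF d1, of m] unfolding s_def by simp
    moreover have "real m * ((- z / s) * s ^ (m - Suc 0)) = - real m * z * s ^ m / (1 - z\<^sup>2)"
    proof -
      have e: "1 - z\<^sup>2 = s * s" using s by simp
      show ?thesis unfolding e using s Suc by (simp add: field_simps)
    qed
    ultimately show ?thesis unfolding s_def by simp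
  qed
qed

lemma Y_DERIV_within[derivative_intros]:
  "((\<lambda>x. Y n j x) has_real_derivative Y n (Suc j) x) (at x within S)"
  using has_field_derivative_at_within[OF Y_DERIV] by blast

lemma E_alg:
  fixes x u v q P D lam nn kk W W' :: real
  assumes P: "P = 1 - x\<^sup>2" and Dd: "D = nn * P - kk * (kk - 1)" and D0: "D \<noteq> 0"
    and lam: "lam = nn - kk\<^sup>2"
    and W: "W = kk * x * u - P * v" and W': "W' = (kk + lam) * u - (kk - 1) * x * v"
  shows "kk * (- 2 * x) * q * (u\<^sup>2 + W\<^sup>2 / D) + (P * q) * (2 * u * v + (2 * W * W' * D - W\<^sup>2 * (nn * (- 2 * x))) / D\<^sup>2)
     = 2 * kk * (kk - 1) * x * q * W\<^sup>2 / D\<^sup>2"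
proof -
  have "kk * (- 2 * x) * q * (u\<^sup>2 + W\<^sup>2 / D) + (P * q) * (2 * u * v + (2 * W * W' * D - W\<^sup>2 * (nn * (- 2 * x))) / D\<^sup>2)
     - 2 * kk * (kk - 1) * x * q * W\<^sup>2 / D\<^sup>2
     = 2 * q * (kk * (- x) * u\<^sup>2 * D\<^sup>2 - kk * x * W\<^sup>2 * D + P * u * v * D\<^sup>2 + P * W * W' * D + nn * x * P * W\<^sup>2
        - kk * (kk - 1) * x * W\<^sup>2) / D\<^sup>2"
    using D0 by (simp add: field_simps power2_eq_square)
  also have "kk * (- x) * u\<^sup>2 * D\<^sup>2 - kk * x * W\<^sup>2 * D + P * u * v * D\<^sup>2 + P * W * W' * D + nn * x * P * W\<^sup>2
        - kk * (kk - 1) * x * W\<^sup>2 = 0"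
    unfolding W W' lam Dd P by algebra
  finally show ?thesis by simp
qed

lemma final_alg:
  fixes eps P nn :: real and k :: nat
  assumes k: "k \<ge> 1" and e: "0 < eps" "eps < 1" and P: "eps \<le> P" "P \<le> 1"
    and nn: "nn * eps = (real k)\<^sup>2"
  shows "eps ^ k * (1 + real k * (1 - eps)) \<le> P ^ k * (1 + (real k)\<^sup>2 * (1 - P) / (nn * P - real k * (real k - 1)))"
proof -
  define r where "r = P / eps"
  have r1: "r \<ge> 1" using P e unfolding r_def by (simp add: field_simps)
  have Pr: "P = eps * r" using e unfolding r_def by simp
  have nnP: "nn * P = (real k)\<^sup>2 * r" unfolding Pr using nn by (simp add: algebra_simps)
  define q where "q = real k * (r - 1)"
  have q0: "q \<ge> 0" using r1 unfolding q_def by simp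
  have den: "nn * P - real k * (real k - 1) = real k * (q + 1)"
    unfolding nnP q_def by (simp add: algebra_simps power2_eq_square)
  have kpos: "real k > 0" using k by simp
  have frac: "(real k)\<^sup>2 * (1 - P) / (nn * P - real k * (real k - 1)) = real k * (1 - P) / (q + 1)"
  proof -
    have ne: "real k + q * real k \<noteq> 0" proof -
      have "q * real k \<ge> 0" using kpos q0 by simp
      thus ?thesis using kpos by linarith
    qed
    show ?thesis unfolding den using ne kpos q0 by (simp add: field_simps power2_eq_square)
  qed
  define B where "B = 1 + real k * (1 - P) / (q + 1)"
  have B1: "B \<ge> 1" unfolding B_def using P kpos q0 by simp
  have bern: "r ^ k \<ge> 1 + q"
    using Bernoulli_inequality[of "r - 1" k] r1 unfolding q_def by simp
  have "(1 + q) * B = 1 + q + real k * (1 - P)" unfolding B_def using q0 by (simp add: field_simps)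
  also have "\<dots> = 1 + real k * r * (1 - eps)" unfolding q_def Pr by (simp add: algebra_simps)
  also have "\<dots> \<ge> 1 + real k * (1 - eps)" using r1 e kpos by (simp add: mult_right_mono)
  finally have "(1 + q) * B \<ge> 1 + real k * (1 - eps)" .
  moreover have "r ^ k * B \<ge> (1 + q) * B" using bern B1 by (simp add: mult_right_mono)
  ultimately have "r ^ k * B \<ge> 1 + real k * (1 - eps)" by simp
  hence "eps ^ k * (r ^ k * B) \<ge> eps ^ k * (1 + real k * (1 - eps))"
    using e by (simp add: mult_left_mono)
  moreover have "P ^ k = eps ^ k * r ^ k" unfolding Pr by (simp add: power_mult_distrib)
  ultimately show ?thesis unfolding frac B_def[symmetric] by (simp add: mult.assoc)
qed

definition Wf :: "nat \<Rightarrow> nat \<Rightarrow> real \<Rightarrow> real" where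
  "Wf n k x = real k * x * Y n k x - (1 - x\<^sup>2) * Y n (Suc k) x"
definition Dx :: "nat \<Rightarrow> nat \<Rightarrow> real \<Rightarrow> real" where
  "Dx n k x = (real n)\<^sup>2 * (1 - x\<^sup>2) - real k * (real k - 1)"
definition Ef :: "nat \<Rightarrow> nat \<Rightarrow> real \<Rightarrow> real" where
  "Ef n k x = (1 - x\<^sup>2) ^ k * ((Y n k x)\<^sup>2 + (Wf n k x)\<^sup>2 / Dx n k x)"

lemma E_deriv:
  assumes k1: "k \<ge> 1" and t: "-1 < t" "t < 1" and D0: "Dx n k t \<noteq> 0"
  shows "DERIV (Ef n k) t :> 2 * real k * (real k - 1) * t * (1 - t\<^sup>2) ^ (k - 1) * (Wf n k t)\<^sup>2 / (Dx n k t)\<^sup>2"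
proof -
  obtain k' where k': "k = Suc k'" using k1 by (cases k) auto
  define u where "u = Y n k t"
  define v where "v = Y n (Suc k) t"
  define vv where "vv = Y n (Suc (Suc k)) t"
  define P where "P = 1 - t\<^sup>2"
  define q where "q = P ^ (k - 1)"
  define W where "W = Wf n k t"
  define D where "D = Dx n k t"
  define Wr where "Wr = real k * u + real k * t * v - ((- 2 * t) * v + P * vv)"
  define nn where "nn = (real n)\<^sup>2"
  define lam where "lam = (real n)\<^sup>2 - (real k)\<^sup>2"
  have Pk: "P ^ k = P * q" unfolding q_def k' by simp
  have dW: "DERIV (Wf n k) t :> Wr"
    unfolding Wf_def Wr_def u_def v_def vv_def P_def
    by (auto intro!: derivative_eq_intros simp: algebra_simps)
  have dD: "DERIV (Dx n k) t :> nn * (- 2 * t)"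
    unfolding Dx_def nn_def by (auto intro!: derivative_eq_intros simp: algebra_simps)
  have dP: "DERIV (\<lambda>x. (1 - x\<^sup>2) ^ k) t :> real k * (- 2 * t) * q"
    unfolding q_def P_def by (auto intro!: derivative_eq_intros simp: algebra_simps)
  have dU: "DERIV (\<lambda>x. (Y n k x)\<^sup>2) t :> 2 * u * v"
    unfolding u_def v_def by (auto intro!: derivative_eq_intros simp: algebra_simps)
  have dQ: "DERIV (\<lambda>x. (Wf n k x)\<^sup>2 / Dx n k x) t :> (2 * W * Wr * D - W\<^sup>2 * (nn * (- 2 * t))) / D\<^sup>2"
    using DERIV_divide[OF DERIV_power[OF dW, of 2] dD D0] unfolding W_def D_def
    by (simp add: power2_eq_square algebra_simps)
  have dE: "DERIV (Ef n k) t :> real k * (- 2 * t) * q * (u\<^sup>2 + W\<^sup>2 / D)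
      + (P * q) * (2 * u * v + (2 * W * Wr * D - W\<^sup>2 * (nn * (- 2 * t))) / D\<^sup>2)"
  proof -
    have "DERIV (\<lambda>x. (1 - x\<^sup>2) ^ k * ((Y n k x)\<^sup>2 + (Wf n k x)\<^sup>2 / Dx n k x)) t :>
       real k * (- 2 * t) * q * ((Y n k t)\<^sup>2 + (Wf n k t)\<^sup>2 / Dx n k t)
       + (2 * u * v + (2 * W * Wr * D - W\<^sup>2 * (nn * (- 2 * t))) / D\<^sup>2) * (1 - t\<^sup>2) ^ k"
      by (rule DERIV_mult[OF dP DERIV_add[OF dU dQ]])
    thus ?thesis unfolding Ef_def[abs_def] using Pk unfolding u_def W_def D_def P_def
      by (simp add: algebra_simps)
  qed
  have ode: "P * vv = (2 * real k + 1) * t * v - lam * u"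
    using deriv_ODE[of t n k] unfolding P_def vv_def v_def u_def lam_def by simp
  have Wr': "Wr = (real k + lam) * u - (real k - 1) * t * v"
    unfolding Wr_def ode by (simp add: algebra_simps)
  have "real k * (- 2 * t) * q * (u\<^sup>2 + W\<^sup>2 / D)
      + (P * q) * (2 * u * v + (2 * W * Wr * D - W\<^sup>2 * (nn * (- 2 * t))) / D\<^sup>2)
      = 2 * real k * (real k - 1) * t * q * W\<^sup>2 / D\<^sup>2"
    by (rule E_alg[where lam = lam]) (use D0 in \<open>simp_all add: P_def D_def Dx_def nn_def lam_def W_def Wf_def u_def v_def Wr'\<close>)
  thus ?thesis using dE unfolding q_def P_def W_def D_def by simp
qed

context
  fixes n k :: nat
  assumes k1: "k \<ge> 1" and nk: "n \<ge> k + 2"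
begin

lemma v1_pos: "Y n (Suc k) 1 > 0" using Y_at_1_pos[of "Suc k" n] nk by simp
lemma vv1_pos: "Y n (Suc (Suc k)) 1 > 0" using Y_at_1_pos[of "Suc (Suc k)" n] nk by simp
lemma lam_pos: "(real n)\<^sup>2 - (real k)\<^sup>2 > 0"
proof -
  have "real k < real n" using nk by simp
  hence "(real k)\<^sup>2 < (real n)\<^sup>2" using power_strict_mono[of "real k" "real n" 2] by simp
  thus ?thesis by simp
qed
lemma lam1_pos: "(real n)\<^sup>2 - (real (Suc k))\<^sup>2 > 0"
proof -
  have "real (Suc k) < real n" using nk by simp
  hence "(real (Suc k))\<^sup>2 < (real n)\<^sup>2" using power_strict_mono[of "real (Suc k)" "real n" 2] by simp
  thus ?thesis by simp
qed

lemma v_has_zero: "\<exists>x. Y n (Suc k) x = 0"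
proof (rule ccontr)
  assume "\<not> (\<exists>x. Y n (Suc k) x = 0)"
  hence nz: "\<And>x. Y n (Suc k) x \<noteq> 0" by blast
  have vpos: "Y n (Suc k) t > 0" if "t \<le> 1" for t
  proof (rule ccontr)
    assume "\<not> Y n (Suc k) t > 0"
    hence "Y n (Suc k) t \<le> 0" by simp
    hence "\<exists>z\<ge>t. z \<le> 1 \<and> Y n (Suc k) z = 0"
      by (intro IVT'[of "Y n (Suc k)" t 0 1]) (use v1_pos that Y_cont in auto)
    then obtain z where "t \<le> z" "z \<le> 1" "Y n (Suc k) z = 0" by blast
    thus False using nz by blast
  qed
  have par: "Y n (Suc k) (-x) = (-1)^(n + Suc k) * Y n (Suc k) x" for x by (rule Y_parity)
  have ev: "even (n + Suc k)"
  proof (rule ccontr)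
    assume "odd (n + Suc k)"
    hence "Y n (Suc k) 0 = - Y n (Suc k) 0" using par[of 0] by simp
    hence "Y n (Suc k) 0 = 0" by simp
    thus False using nz by blast
  qed
  have vv0: "Y n (Suc (Suc k)) 0 = 0"
  proof -
    have "odd (n + Suc (Suc k))" using ev by simp
    hence "Y n (Suc (Suc k)) 0 = - Y n (Suc (Suc k)) 0" using Y_parity[of n "Suc (Suc k)" 0] by simp
    thus ?thesis by simp
  qed
  obtain x0 where x0: "x0 \<in> {0..1}" "\<And>y. y \<in> {0..1} \<Longrightarrow> Y n (Suc k) x0 \<le> Y n (Suc k) y"
    using continuous_attains_inf[of "{0..1::real}" "Y n (Suc k)"] Y_cont by auto
  show False
  proof (cases "x0 = 1")
    case True
    obtain d where d: "d > 0" "\<And>h. h > 0 \<Longrightarrow> h < d \<Longrightarrow> Y n (Suc k) (1 - h) < Y n (Suc k) 1"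
      using DERIV_pos_inc_left[OF Y_DERIV[of n "Suc k" 1] vv1_pos] by blast
    define h where "h = min (d/2) (1/2)"
    have "h > 0" "h < d" "1 - h \<in> {0..1}" using d unfolding h_def by auto
    thus False using d(2)[of h] x0(2)[of "1 - h"] True by simp
  next
    case False
    hence x0lt: "x0 < 1" using x0 by simp
    have dv0: "Y n (Suc (Suc k)) x0 = 0"
    proof (cases "x0 = 0")
      case True then show ?thesis using vv0 by simp
    next
      case False
      hence "0 < x0" using x0 by simp
      show ?thesis
      proof (rule DERIV_local_min[OF Y_DERIV[of n "Suc k" x0], of "min x0 (1 - x0)"])
        show "0 < min x0 (1 - x0)" using \<open>0 < x0\<close> x0lt by simp
        show "\<forall>y. \<bar>x0 - y\<bar> < min x0 (1 - x0) \<longrightarrow> Y n (Suc k) x0 \<le> Y n (Suc k) y"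
          using x0(2) by (auto simp: abs_if split: if_splits)
      qed
    qed
    have ode: "(1 - x0\<^sup>2) * Y n (Suc (Suc (Suc k))) x0 - (2 * real (Suc k) + 1) * x0 * Y n (Suc (Suc k)) x0
     + ((real n)\<^sup>2 - (real (Suc k))\<^sup>2) * Y n (Suc k) x0 = 0" by (rule deriv_ODE)
    have "x0\<^sup>2 < 1" using x0 x0lt by (simp add: power_less_one_iff abs_square_less_1)
    hence "1 - x0\<^sup>2 > 0" by simp
    moreover have "((real n)\<^sup>2 - (real (Suc k))\<^sup>2) * Y n (Suc k) x0 > 0"
      using lam1_pos vpos[of x0] x0lt by simp
    ultimately have "(1 - x0\<^sup>2) * Y n (Suc (Suc (Suc k))) x0 < 0" using ode dv0 by simp
    hence ddv: "Y n (Suc (Suc (Suc k))) x0 < 0" using \<open>1 - x0\<^sup>2 > 0\<close>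
      by (simp add: mult_less_0_iff)
    obtain d where d: "d > 0" "\<And>h. h > 0 \<Longrightarrow> h < d \<Longrightarrow> Y n (Suc (Suc k)) (x0 + h) < Y n (Suc (Suc k)) x0"
      using DERIV_neg_dec_right[OF Y_DERIV[of n "Suc (Suc k)" x0] ddv] by blast
    define h where "h = min (d/2) ((1 - x0)/2)"
    have hle: "h \<le> (1 - x0)/2" unfolding h_def by (rule min.cobounded2)
    have h: "h > 0" "h < d" "x0 + h \<in> {0..1}" using d x0 x0lt hle unfolding h_def by auto
    obtain l z where z: "x0 < z" "z < x0 + h" "DERIV (Y n (Suc k)) z :> l"
      "Y n (Suc k) (x0 + h) - Y n (Suc k) x0 = (x0 + h - x0) * l"
      using MVT[of x0 "x0 + h" "Y n (Suc k)"] h Y_cont real_differentiable_def Y_DERIV by (meson less_add_same_cancel1)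
    have "l = Y n (Suc (Suc k)) z" using z(3) Y_DERIV DERIV_unique by blast
    moreover have "Y n (Suc (Suc k)) z < 0"
      using d(2)[of "z - x0"] z h dv0 by simp
    ultimately have "h * l < 0" using h by (simp add: mult_pos_neg)
    hence "Y n (Suc k) (x0 + h) < Y n (Suc k) x0" using z(4) by simp
    thus False using x0(2)[of "x0 + h"] h by simp
  qed
qed


lemma v_nonzero_poly: "cheb_T_deriv n (Suc k) \<noteq> 0"
  using v1_pos by auto

lemma Zfin: "finite {x. Y n (Suc k) x = 0}"
  by (rule poly_roots_finite[OF v_nonzero_poly])

lemma Zne: "{x. Y n (Suc k) x = 0} \<noteq> {}"
  using v_has_zero by auto

lemma om_zero: "Y n (Suc k) (cheb_omega n k) = 0"
  using Max_in[OF Zfin Zne] unfolding cheb_omega_def by simp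

lemma om_max: "Y n (Suc k) z = 0 \<Longrightarrow> z \<le> cheb_omega n k"
  using Max_ge[OF Zfin] unfolding cheb_omega_def by simp

lemma om_nonneg: "cheb_omega n k \<ge> 0"
proof -
  have "Y n (Suc k) (- cheb_omega n k) = 0" using Y_parity[of n "Suc k" "cheb_omega n k"] om_zero by simp
  hence "- cheb_omega n k \<le> cheb_omega n k" by (rule om_max)
  thus ?thesis by simp
qed

lemma om_lt1: "cheb_omega n k < 1"
proof (rule ccontr)
  assume "\<not> cheb_omega n k < 1"
  hence "Y n (Suc k) (cheb_omega n k) > 0" using Y_pos_ge_1[of "Suc k" n] nk by simp
  thus False using om_zero by simp
qed

lemma v_pos_after: "x > cheb_omega n k \<Longrightarrow> Y n (Suc k) x > 0"
proof (rule ccontr)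
  assume x: "x > cheb_omega n k" and "\<not> Y n (Suc k) x > 0"
  hence vx: "Y n (Suc k) x \<le> 0" by simp
  have "x < 1"
  proof (rule ccontr)
    assume "\<not> x < 1"
    hence "Y n (Suc k) x > 0" using Y_pos_ge_1[of "Suc k" n] nk by simp
    thus False using vx by simp
  qed
  have "\<exists>z\<ge>x. z \<le> 1 \<and> Y n (Suc k) z = 0"
    by (intro IVT'[of "Y n (Suc k)" x 0 1]) (use vx v1_pos \<open>x < 1\<close> Y_cont in auto)
  then obtain z where "z \<ge> x" "Y n (Suc k) z = 0" by blast
  thus False using om_max x by force
qed

lemma vv_om_nonneg: "Y n (Suc (Suc k)) (cheb_omega n k) \<ge> 0"
proof (rule ccontr)
  assume "\<not> ?thesis"
  hence "Y n (Suc (Suc k)) (cheb_omega n k) < 0" by simp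
  then obtain d where d: "d > 0" "\<And>h. h > 0 \<Longrightarrow> h < d \<Longrightarrow> Y n (Suc k) (cheb_omega n k + h) < Y n (Suc k) (cheb_omega n k)"
    using DERIV_neg_dec_right[OF Y_DERIV[of n "Suc k" "cheb_omega n k"]] by blast
  have "Y n (Suc k) (cheb_omega n k + d/2) < 0" using d(2)[of "d/2"] d(1) om_zero by simp
  moreover have "Y n (Suc k) (cheb_omega n k + d/2) > 0" using v_pos_after d(1) by simp
  ultimately show False by simp
qed

lemma u_om_nonpos: "Y n k (cheb_omega n k) \<le> 0"
proof -
  let ?w = "cheb_omega n k"
  have ode: "(1 - ?w\<^sup>2) * Y n (Suc (Suc k)) ?w - (2 * real k + 1) * ?w * Y n (Suc k) ?w
     + ((real n)\<^sup>2 - (real k)\<^sup>2) * Y n k ?w = 0" by (rule deriv_ODE)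
  have "?w\<^sup>2 < 1" using om_nonneg om_lt1 by (simp add: power_less_one_iff abs_square_less_1)
  hence "(1 - ?w\<^sup>2) * Y n (Suc (Suc k)) ?w \<ge> 0" using vv_om_nonneg by simp
  hence "((real n)\<^sup>2 - (real k)\<^sup>2) * Y n k ?w \<le> 0" using ode om_zero by simp
  thus ?thesis using lam_pos nk by (auto simp add: mult_le_0_iff)
qed


lemma M_lemma:
  assumes a: "0 \<le> a" "a < 1"
    and hyp: "\<And>x. a < x \<Longrightarrow> x < 1 \<Longrightarrow> Y n (Suc k) x > 0 \<and> (real n)\<^sup>2 * (1 - x\<^sup>2) < real k * (real k + 1)"
  shows "real k * a * Y n (Suc k) a < ((real n)\<^sup>2 - (real k)\<^sup>2) * Y n k a"
proof -
  define lam where "lam = (real n)\<^sup>2 - (real k)\<^sup>2"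
  define M where "M x = sqrt (1 - x\<^sup>2) ^ k * (real k * x * Y n (Suc k) x - lam * Y n k x)" for x
  define Md where "Md z = (- real k * z * sqrt (1 - z\<^sup>2) ^ k / (1 - z\<^sup>2)) * (real k * z * Y n (Suc k) z - lam * Y n k z)
     + (real k * Y n (Suc k) z + real k * z * Y n (Suc (Suc k)) z - lam * Y n (Suc k) z) * sqrt (1 - z\<^sup>2) ^ k" for z
  have cont: "continuous_on {a..1} M" unfolding M_def by (intro continuous_intros)
  have der: "DERIV M z :> Md z" if z: "a < z" "z < 1" for z
  proof -
    have "-1 < z" using z a by simp
    have d1: "((\<lambda>x. sqrt (1 - x\<^sup>2) ^ k) has_real_derivative (- real k * z * sqrt (1 - z\<^sup>2) ^ k / (1 - z\<^sup>2))) (at z)"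
      by (rule sqrt_pow_deriv[OF \<open>-1 < z\<close> z(2)])
    have d2: "((\<lambda>x. real k * x * Y n (Suc k) x - lam * Y n k x) has_real_derivative
       (real k * Y n (Suc k) z + real k * z * Y n (Suc (Suc k)) z - lam * Y n (Suc k) z)) (at z)"
      by (auto intro!: derivative_eq_intros)
    show ?thesis unfolding M_def Md_def using DERIV_mult[OF d1 d2] by simp
  qed
  have Mdpos: "Md z > 0" if z: "a < z" "z < 1" for z
  proof -
    define p where "p = 1 - z\<^sup>2"
    define s where "s = sqrt p"
    have p: "p > 0" using z a unfolding p_def by (simp add: abs_square_less_1)
    have s: "s > 0" "s * s = p" using p unfolding s_def by auto
    have ode: "p * Y n (Suc (Suc k)) z = (2 * real k + 1) * z * Y n (Suc k) z - lam * Y n k z"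
      using deriv_ODE[of z n k] unfolding p_def lam_def by simp
    have "p * Md z = s ^ k * (real k * z * Y n (Suc k) z * (- real k * z) + real k * z * lam * Y n k z
        + p * (real k - lam) * Y n (Suc k) z + real k * z * (p * Y n (Suc (Suc k)) z))"
      unfolding Md_def s_def[symmetric] p_def[symmetric] using p by (simp add: field_simps)
    also have "\<dots> = s ^ k * (real k * z * Y n (Suc k) z * (- real k * z) + real k * z * lam * Y n k z
        + p * (real k - lam) * Y n (Suc k) z + real k * z * ((2 * real k + 1) * z * Y n (Suc k) z - lam * Y n k z))"
      by (simp only: ode)
    also have "\<dots> = s ^ k * Y n (Suc k) z * (real k * (real k + 1) - (real n)\<^sup>2 * p)"
      unfolding lam_def p_def by (simp add: algebra_simps power2_eq_square)
    finally have e: "p * Md z = s ^ k * Y n (Suc k) z * (real k * (real k + 1) - (real n)\<^sup>2 * p)" .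
    have "s ^ k * Y n (Suc k) z * (real k * (real k + 1) - (real n)\<^sup>2 * p) > 0"
      using hyp[OF z] s(1) unfolding p_def by simp
    hence "p * Md z > 0" using e by simp
    thus ?thesis using p by (simp add: zero_less_mult_iff)
  qed
  obtain l z where z: "a < z" "z < 1" "DERIV M z :> l" "M 1 - M a = (1 - a) * l"
    using MVT[OF a(2) cont] der real_differentiable_def by meson
  have "l = Md z" using z(3) der[OF z(1,2)] DERIV_unique by blast
  hence "M 1 - M a > 0" using z(4) Mdpos[OF z(1,2)] a by simp
  moreover have "M 1 = 0" unfolding M_def using k1 by simp
  ultimately have "M a < 0" by simp
  moreover have "sqrt (1 - a\<^sup>2) ^ k > 0" using a by (simp add: abs_square_less_1)
  moreover have "a\<^sup>2 < 1" using a by (simp add: abs_square_less_1)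
  ultimately have "real k * a * Y n (Suc k) a - lam * Y n k a < 0"
    unfolding M_def by (auto simp add: mult_less_0_iff)
  thus ?thesis unfolding lam_def by simp
qed


lemma n_pos: "real n > 0" using nk by simp

lemma eps_props: "0 < (real k)\<^sup>2 / (real n)\<^sup>2" "(real k)\<^sup>2 / (real n)\<^sup>2 < 1"
proof -
  show "0 < (real k)\<^sup>2 / (real n)\<^sup>2" using k1 n_pos by simp
  have "(real k)\<^sup>2 < (real n)\<^sup>2" using lam_pos by simp
  thus "(real k)\<^sup>2 / (real n)\<^sup>2 < 1" using n_pos by simp
qed

abbreviation xk :: real where "xk \<equiv> sqrt (1 - (real k)\<^sup>2 / (real n)\<^sup>2)"

lemma xk_props: "0 < xk" "xk < 1" "xk\<^sup>2 = 1 - (real k)\<^sup>2 / (real n)\<^sup>2"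
  "(real n)\<^sup>2 * xk\<^sup>2 = (real n)\<^sup>2 - (real k)\<^sup>2"
proof -
  show "0 < xk" using eps_props by simp
  show "xk < 1" using eps_props by simp
  show x2: "xk\<^sup>2 = 1 - (real k)\<^sup>2 / (real n)\<^sup>2" using eps_props by simp
  show "(real n)\<^sup>2 * xk\<^sup>2 = (real n)\<^sup>2 - (real k)\<^sup>2" unfolding x2 using n_pos by (simp add: field_simps)
qed

lemma hyp_region:
  assumes "xk \<le> x" "x < 1"
  shows "(real n)\<^sup>2 * (1 - x\<^sup>2) < real k * (real k + 1)"
proof -
  have "xk\<^sup>2 \<le> x\<^sup>2" by (rule power_mono) (use assms xk_props(1) in auto)
  hence "1 - x\<^sup>2 \<le> (real k)\<^sup>2 / (real n)\<^sup>2" unfolding xk_props(3) by simp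
  hence "(real n)\<^sup>2 * (1 - x\<^sup>2) \<le> (real k)\<^sup>2" using n_pos by (simp add: field_simps)
  also have "\<dots> < real k * (real k + 1)" using k1 by (simp add: power2_eq_square algebra_simps)
  finally show ?thesis .
qed

lemma om_lt_xk: "cheb_omega n k < xk"
proof (rule ccontr)
  assume "\<not> cheb_omega n k < xk"
  hence ge: "xk \<le> cheb_omega n k" by simp
  have "real k * cheb_omega n k * Y n (Suc k) (cheb_omega n k) < ((real n)\<^sup>2 - (real k)\<^sup>2) * Y n k (cheb_omega n k)"
  proof (rule M_lemma[OF om_nonneg om_lt1])
    fix x assume "cheb_omega n k < x" "x < 1"
    thus "Y n (Suc k) x > 0 \<and> (real n)\<^sup>2 * (1 - x\<^sup>2) < real k * (real k + 1)"
      using v_pos_after hyp_region ge by simp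
  qed
  hence "0 < ((real n)\<^sup>2 - (real k)\<^sup>2) * Y n k (cheb_omega n k)" using om_zero by simp
  hence "Y n k (cheb_omega n k) > 0" using lam_pos by (simp add: zero_less_mult_iff)
  thus False using u_om_nonpos by simp
qed

lemma at_xk: "real k * xk * Y n (Suc k) xk < ((real n)\<^sup>2 - (real k)\<^sup>2) * Y n k xk"
proof (rule M_lemma)
  show "0 \<le> xk" "xk < 1" using xk_props by auto
  fix x assume "xk < x" "x < 1"
  thus "Y n (Suc k) x > 0 \<and> (real n)\<^sup>2 * (1 - x\<^sup>2) < real k * (real k + 1)"
    using v_pos_after hyp_region om_lt_xk by simp
qed

lemma v_xk_pos: "Y n (Suc k) xk > 0" using v_pos_after om_lt_xk by simp

lemma u_xk_pos: "Y n k xk > 0"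
proof -
  have "0 < real k * xk * Y n (Suc k) xk" using k1 xk_props(1) v_xk_pos by simp
  hence "0 < ((real n)\<^sup>2 - (real k)\<^sup>2) * Y n k xk" using at_xk by simp
  thus ?thesis using lam_pos by (simp add: zero_less_mult_iff)
qed

lemma Dx_pos: assumes "0 \<le> t" "t \<le> xk" shows "Dx n k t > 0"
proof -
  have "t\<^sup>2 \<le> xk\<^sup>2" by (rule power_mono) (use assms in auto)
  hence "(real k)\<^sup>2 / (real n)\<^sup>2 \<le> 1 - t\<^sup>2" unfolding xk_props(3) by simp
  hence "(real k)\<^sup>2 \<le> (real n)\<^sup>2 * (1 - t\<^sup>2)" using n_pos by (simp add: field_simps)
  moreover have "real k * (real k - 1) < (real k)\<^sup>2" using k1 by (simp add: power2_eq_square algebra_simps)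
  ultimately show ?thesis unfolding Dx_def by simp
qed

lemma E_mono:
  assumes "0 \<le> a" "a \<le> b" "b \<le> xk"
  shows "Ef n k a \<le> Ef n k b"
proof (rule DERIV_nonneg_imp_nondecreasing[OF assms(2)])
  fix t assume t: "a \<le> t" "t \<le> b"
  hence t0: "0 \<le> t" "t \<le> xk" using assms by auto
  have "t < 1" using t0 xk_props(2) by linarith
  have D: "Dx n k t > 0" by (rule Dx_pos[OF t0])
  have "DERIV (Ef n k) t :> 2 * real k * (real k - 1) * t * (1 - t\<^sup>2) ^ (k - 1) * (Wf n k t)\<^sup>2 / (Dx n k t)\<^sup>2"
    by (rule E_deriv[OF k1]) (use t0 \<open>t < 1\<close> D in auto)
  moreover have "2 * real k * (real k - 1) * t * (1 - t\<^sup>2) ^ (k - 1) * (Wf n k t)\<^sup>2 / (Dx n k t)\<^sup>2 \<ge> 0"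
  proof -
    have "1 - t\<^sup>2 \<ge> 0" using t0 \<open>t < 1\<close> by (simp add: abs_square_le_1)
    moreover have "real k - 1 \<ge> 0" using k1 by simp
    ultimately show ?thesis using t0 by simp
  qed
  ultimately show "\<exists>y. DERIV (Ef n k) t :> y \<and> 0 \<le> y" by blast
qed

lemma main_sq: "(Y n k (cheb_omega n k))\<^sup>2 < (Y n k xk)\<^sup>2"
proof -
  let ?w = "cheb_omega n k"
  define eps where "eps = (real k)\<^sup>2 / (real n)\<^sup>2"
  define P where "P = 1 - ?w\<^sup>2"
  define uw where "uw = Y n k ?w"
  define uk where "uk = Y n k xk"
  define vk where "vk = Y n (Suc k) xk"
  have e: "0 < eps" "eps < 1" using eps_props unfolding eps_def by auto
  have xk2: "xk\<^sup>2 = 1 - eps" using xk_props unfolding eps_def by simp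
  have nneps: "(real n)\<^sup>2 * eps = (real k)\<^sup>2" unfolding eps_def using n_pos by simp
  have wle: "?w \<le> xk" using om_lt_xk by simp
  have "?w\<^sup>2 \<le> xk\<^sup>2" by (rule power_mono) (use wle om_nonneg in auto)
  hence epsP: "eps \<le> P" unfolding P_def xk2 by simp
  have P1: "P \<le> 1" unfolding P_def by simp
  have Ppos: "P > 0" using e epsP by simp
  have Dw: "Dx n k ?w = (real n)\<^sup>2 * P - real k * (real k - 1)" unfolding Dx_def P_def by simp
  have Dwpos: "Dx n k ?w > 0" using Dx_pos om_nonneg wle by simp
  define D where "D = Dx n k ?w"
  have W0: "Wf n k ?w = real k * ?w * uw" unfolding Wf_def om_zero uw_def by simp
  have "Ef n k ?w = P ^ k * (uw\<^sup>2 + (real k * ?w * uw)\<^sup>2 / D)"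
    unfolding Ef_def W0 P_def D_def uw_def by simp
  also have "\<dots> = P ^ k * (1 + (real k)\<^sup>2 * (1 - P) / D) * uw\<^sup>2"
    using Dwpos unfolding D_def[symmetric] P_def by (simp add: field_simps power2_eq_square)
  finally have Ew: "Ef n k ?w = P ^ k * (1 + (real k)\<^sup>2 * (1 - P) / ((real n)\<^sup>2 * P - real k * (real k - 1))) * uw\<^sup>2"
    unfolding D_def Dw .
  have Dk: "Dx n k xk = real k" unfolding Dx_def using xk_props(4) by (simp add: power2_eq_square algebra_simps)
  have Wk: "Wf n k xk = real k * xk * uk - eps * vk"
    unfolding Wf_def uk_def vk_def eps_def using xk_props(3) by simp
  have Wk_lt: "Wf n k xk < real k * xk * uk" unfolding Wk using e v_xk_pos unfolding vk_def by simp
  have Wk_pos: "Wf n k xk > 0"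
  proof -
    have "real k * xk * vk < (real n)\<^sup>2 * xk\<^sup>2 * uk" using at_xk xk_props(4) unfolding vk_def uk_def by simp
    hence "real k * (real k * xk * vk) < real k * ((real n)\<^sup>2 * xk\<^sup>2 * uk)" using k1 by simp
    hence "xk * ((real k)\<^sup>2 * vk) < xk * ((real n)\<^sup>2 * (real k * xk * uk))"
      by (simp add: power2_eq_square algebra_simps)
    hence "(real k)\<^sup>2 * vk < (real n)\<^sup>2 * (real k * xk * uk)" using xk_props(1) by simp
    hence "eps * vk < real k * xk * uk" unfolding eps_def using n_pos by (simp add: field_simps)
    thus ?thesis unfolding Wk by simp
  qed
  have "(Wf n k xk)\<^sup>2 < (real k * xk * uk)\<^sup>2"
    using Wk_pos Wk_lt by (simp add: power_strict_mono)
  moreover have sq: "(real k * xk * uk)\<^sup>2 = (real k * (1 - eps) * uk\<^sup>2) * real k"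
    unfolding power_mult_distrib xk2 by (simp add: power2_eq_square algebra_simps)
  ultimately have "(Wf n k xk)\<^sup>2 < (real k * (1 - eps) * uk\<^sup>2) * real k" by simp
  hence Wq: "(Wf n k xk)\<^sup>2 / real k < real k * (1 - eps) * uk\<^sup>2"
    using k1 by (simp add: pos_divide_less_eq)
  have om1: "1 - xk\<^sup>2 = eps" unfolding xk2 by simp
  have E1: "Ef n k xk = eps ^ k * (uk\<^sup>2 + (Wf n k xk)\<^sup>2 / real k)"
    unfolding Ef_def Dk om1 uk_def by simp
  have "eps ^ k * (uk\<^sup>2 + (Wf n k xk)\<^sup>2 / real k) < eps ^ k * (uk\<^sup>2 + real k * (1 - eps) * uk\<^sup>2)"
    using Wq e by simp
  hence Ek: "Ef n k xk < eps ^ k * (1 + real k * (1 - eps)) * uk\<^sup>2"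
    unfolding E1 by (simp add: algebra_simps)
  have Emono: "Ef n k ?w \<le> Ef n k xk" by (rule E_mono[OF om_nonneg wle order_refl])
  have alg: "eps ^ k * (1 + real k * (1 - eps)) \<le> P ^ k * (1 + (real k)\<^sup>2 * (1 - P) / ((real n)\<^sup>2 * P - real k * (real k - 1)))"
    by (rule final_alg[OF k1 e epsP P1 nneps])
  define C where "C = P ^ k * (1 + (real k)\<^sup>2 * (1 - P) / ((real n)\<^sup>2 * P - real k * (real k - 1)))"
  have Cpos: "C > 0"
  proof -
    have "(real k)\<^sup>2 * (1 - P) / ((real n)\<^sup>2 * P - real k * (real k - 1)) \<ge> 0"
      using P1 Dwpos Dw by simp
    thus ?thesis unfolding C_def using Ppos by simp
  qed
  have "C * uw\<^sup>2 < C * uk\<^sup>2"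
  proof -
    have "C * uw\<^sup>2 = Ef n k ?w" using Ew unfolding C_def by simp
    also have "\<dots> < eps ^ k * (1 + real k * (1 - eps)) * uk\<^sup>2" using Emono Ek by simp
    also have "\<dots> \<le> C * uk\<^sup>2" using alg unfolding C_def by (simp add: mult_right_mono)
    finally show ?thesis .
  qed
  thus ?thesis using Cpos unfolding uw_def uk_def by simp
qed

lemma tau_lt:
  "cheb_tau n k < DS_majorant n k xk / poly (cheb_T_deriv n k) 1"
proof -
  have u1: "Y n k 1 > 0" using Y_at_1_pos[of k n] nk by simp
  have "\<bar>Y n k (cheb_omega n k)\<bar> < Y n k xk"
  proof -
    have "\<bar>Y n k (cheb_omega n k)\<bar>\<^sup>2 < (Y n k xk)\<^sup>2" using main_sq by simp
    thus ?thesis using u_xk_pos power2_less_imp_less by fastforce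
  qed
  also have "Y n k xk \<le> DS_majorant n k xk"
  proof -
    have "Y n k xk = sqrt ((Y n k xk)\<^sup>2)" using u_xk_pos by simp
    also have "\<dots> \<le> DS_majorant n k xk" unfolding DS_majorant_def by simp
    finally show ?thesis .
  qed
  finally have "\<bar>Y n k (cheb_omega n k)\<bar> < DS_majorant n k xk" .
  thus ?thesis unfolding cheb_tau_def using u1 by (simp add: divide_strict_right_mono)
qed

end

theorem proposition4p1:
  fixes n k :: nat
  assumes "k \<ge> 1" and "n \<ge> k + 2"
  shows "cheb_tau n k <
           DS_majorant n k (sqrt (1 - (real k)\<^sup>2 / (real n)\<^sup>2)) / poly (cheb_T_deriv n k) 1"
  by (rule tau_lt[OF assms])

end
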